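(* There exist absolute constants $N_0\ge1$ and $C>0$ such that the following holds. Let $c_*\ge N_0$, $T>1$, and let $B\subset\mathbb{R}^3$ be a ball of radius $c_*/100$ (arbitrary center). Set $$V=\{(\xi,n)\in\mathbb{R}^2\times\mathbb{Z}:\ c_*-1\le|(\xi,n)|\le c_*+1\}\cap B,$$ and for $a,b\in V$ set $$U=U_{a,b}=\{\zeta\in\mathbb{R}^3:\ c_*-1\le|\zeta|\le c_*+1,\ |(\zeta-a)\cdot(\zeta-b)|\le \tfrac1T\}.$$ Then for all $a,b\in V$, $$\sum_{n\in\mathbb{Z}}\int_{\mathbb{R}^2}\mathbf{1}_U(\xi,n)\,d\xi\le \frac{C}{T}.$$
   Context: $\mathbb{R}^2\times\mathbb{Z}$ is viewed as a subset of $\mathbb{R}^3$, and $|\cdot|$, $\cdot$ denote the Euclidean norm and inner product on $\mathbb{R}^3$. *)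

theory Defs
  imports "HOL-Analysis.Analysis"
begin

text \<open>R^3 is modelled as the Euclidean space (real \<times> real) \<times> real, so that
  R^2 \<times> Z sits inside it as points (xi, of_int n).\<close>

definition Vset :: "real \<Rightarrow> ((real \<times> real) \<times> real) \<Rightarrow> ((real \<times> real) \<times> real) set" where
  "Vset cs ctr = {p. snd p \<in> \<int> \<and> cs - 1 \<le> norm p \<and> norm p \<le> cs + 1} \<inter> cball ctr (cs / 100)"

definition Uset :: "real \<Rightarrow> real \<Rightarrow> ((real \<times> real) \<times> real) \<Rightarrow> ((real \<times> real) \<times> real)
    \<Rightarrow> ((real \<times> real) \<times> real) set" where
  "Uset cs T a b = {z. cs - 1 \<le> norm z \<and> norm z \<le> cs + 1 \<and> \<bar>(z - a) \<bullet> (z - b)\<bar> \<le> 1 / T}"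

end

theory Submission
  imports Defs
begin

lemma ball_area:
  fixes c :: "real \<times> real" assumes "r \<ge> 0"
  shows "emeasure lborel (cball c r) = ennreal (pi * r^2)"
    "emeasure lborel (ball c r) = ennreal (pi * r^2)"
  using emeasure_cball[OF assms, of c] emeasure_ball[OF assms, of c]
  by (simp_all add: eval_unit_ball_vol power2_eq_square)

lemma sum_inv_sqrt: "(\<Sum>k=1..K. 1 / sqrt (real k)) \<le> 2 * sqrt (real K)"
proof (induction K)
  case 0 then show ?case by simp
next
  case (Suc K)
  have key: "1 / sqrt (real (Suc K)) \<le> 2 * sqrt (real (Suc K)) - 2 * sqrt (real K)"
  proof -
    have a: "sqrt (real K) * sqrt (real (Suc K)) \<le> real K + 1/2"
    proof -
      have "sqrt (real K) * sqrt (real (Suc K)) = sqrt (real K * real (Suc K))" by (simp add: real_sqrt_mult)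
      also have "\<dots> \<le> sqrt ((real K + 1/2)^2)" 
        by (rule real_sqrt_le_mono) (simp add: power2_eq_square algebra_simps)
      also have "\<dots> = real K + 1/2" by simp
      finally show ?thesis .
    qed
    have p: "sqrt (real (Suc K)) > 0" by simp
    have "sqrt (real (Suc K)) * sqrt (real (Suc K)) = real K + 1" by simp
    with a p show ?thesis by (simp add: field_simps)
  qed
  have "(\<Sum>k=1..Suc K. 1 / sqrt (real k)) = (\<Sum>k=1..K. 1 / sqrt (real k)) + 1 / sqrt (real (Suc K))"
    by simp
  also have "\<dots> \<le> 2 * sqrt (real (Suc K))" using Suc key by linarith
  finally show ?case .
qed

lemma geom:
  fixes a b z :: "'a::real_inner"
  assumes c: "c \<ge> 3" and e: "0 < \<epsilon>" "\<epsilon> \<le> 1"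
    and na: "c - 1 \<le> norm a" "norm a \<le> c + 1"
    and nb: "c - 1 \<le> norm b" "norm b \<le> c + 1"
    and nz: "c - 1 \<le> norm z" "norm z \<le> c + 1"
    and ab: "norm (a - b) \<le> c / 50"
    and f: "\<bar>(z - a) \<bullet> (z - b)\<bar> \<le> \<epsilon>"
  defines "m \<equiv> (1/2) *\<^sub>R (a + b)"
  shows "\<bar>m \<bullet> (z - m)\<bar> \<le> 5 * norm m" "norm m \<ge> c / 2"
    "\<bar>(norm (z - m))^2 - (norm (a - b))^2 / 4\<bar> \<le> \<epsilon>"
proof -
  have id1: "(z - a) \<bullet> (z - b) = (norm (z - m))^2 - (norm (a - b))^2 / 4"
    unfolding m_def power2_norm_eq_inner
    by (simp add: inner_diff_left inner_diff_right inner_add_left inner_add_right inner_commute algebra_simps) (simp add: field_simps)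
  then show "\<bar>(norm (z - m))^2 - (norm (a - b))^2 / 4\<bar> \<le> \<epsilon>" using f by simp
  have id2: "4 * (m \<bullet> (z - m)) = 2 * (norm z)^2 - ((norm a)^2 + (norm b)^2) - 2 * ((z - a) \<bullet> (z - b))"
    unfolding m_def power2_norm_eq_inner
    by (simp add: inner_diff_left inner_diff_right inner_add_left inner_add_right inner_commute algebra_simps)
  have sq: "(c-1)^2 \<le> (norm x)^2 \<and> (norm x)^2 \<le> (c+1)^2" if "c - 1 \<le> norm x" "norm x \<le> c + 1" for x :: 'a
    using that c by (intro conjI power_mono) auto
  have "\<bar>4 * (m \<bullet> (z - m))\<bar> \<le> 8 * c + 2 * \<epsilon>"
  proof -
    have d: "(c+1)^2 - (c-1)^2 = 4*c" by (simp add: power2_eq_square algebra_simps)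
    have f': "- \<epsilon> \<le> (z - a) \<bullet> (z - b) \<and> (z - a) \<bullet> (z - b) \<le> \<epsilon>" using f by (simp only: abs_le_iff) auto
    define A where "A = (norm a)^2"
    define B where "B = (norm b)^2"
    define Z where "Z = (norm z)^2"
    define F where "F = (z - a) \<bullet> (z - b)"
    define L where "L = (c-1)^2"
    define H where "H = (c+1)^2"
    have "L \<le> A" "A \<le> H" "L \<le> B" "B \<le> H" "L \<le> Z" "Z \<le> H" "-\<epsilon> \<le> F" "F \<le> \<epsilon>" "H - L = 4 * c"
      using sq[OF na] sq[OF nb] sq[OF nz] f' d unfolding A_def B_def Z_def F_def L_def H_def by auto
    then have "\<bar>2 * Z - (A + B) - 2 * F\<bar> \<le> 8 * c + 2 * \<epsilon>" by linarith
    then show ?thesis unfolding id2 A_def B_def Z_def F_def .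
  qed
  then have A: "\<bar>m \<bullet> (z - m)\<bar> \<le> 2 * c + 1/2" using e by linarith
  have "norm (a - m) = norm (a - b) / 2"
  proof -
    have "a - m = (1/2) *\<^sub>R (a - b)" unfolding m_def by (simp add: algebra_simps flip: scaleR_add_left)
    then show ?thesis by simp
  qed
  then have "norm (a - m) \<le> c / 100" using ab by simp
  moreover have "norm a \<le> norm m + norm (a - m)" using norm_triangle_ineq[of m "a - m"] by simp
  ultimately show B: "norm m \<ge> c / 2" using na c by linarith
  have "2 * c + 1/2 \<le> 5 * (c/2)" using c by simp
  also have "\<dots> \<le> 5 * norm m" using B by simp
  finally show "\<bar>m \<bullet> (z - m)\<bar> \<le> 5 * norm m" using A by linarith
qed

lemma sec_bound:
  fixes \<sigma> K \<delta> z0 :: real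
  assumes s: "\<sigma> > 0" and K: "K > 0" and d: "\<delta> \<ge> 0"
  shows "emeasure lborel {z::real. K - \<delta> \<le> \<sigma> * (z - z0)^2 \<and> \<sigma> * (z - z0)^2 \<le> K}
     \<le> ennreal (2 * \<delta> / (sqrt \<sigma> * sqrt K))"
proof -
  define b where "b = sqrt (K / \<sigma>)"
  define a where "a = sqrt (max (K - \<delta>) 0 / \<sigma>)"
  have b0: "b > 0" unfolding b_def using s K by simp
  have a0: "a \<ge> 0" unfolding a_def using s by simp
  have ab: "a \<le> b" unfolding a_def b_def using s d K
    by (intro real_sqrt_le_mono divide_right_mono) auto
  have sub: "{z::real. K - \<delta> \<le> \<sigma> * (z - z0)^2 \<and> \<sigma> * (z - z0)^2 \<le> K} \<subseteq> {z0 - b..z0 - a} \<union> {z0 + a..z0 + b}"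
  proof
    fix z assume "z \<in> {z::real. K - \<delta> \<le> \<sigma> * (z - z0)^2 \<and> \<sigma> * (z - z0)^2 \<le> K}"
    then have h1: "K - \<delta> \<le> \<sigma> * (z - z0)^2" and h2: "\<sigma> * (z - z0)^2 \<le> K" by auto
    have "(z - z0)^2 \<le> K / \<sigma>" using h2 s by (simp add: field_simps)
    then have u: "\<bar>z - z0\<bar> \<le> b" unfolding b_def using real_sqrt_le_mono by fastforce
    have "max (K - \<delta>) 0 / \<sigma> \<le> (z - z0)^2" using h1 s by (auto simp: field_simps)
    then have l: "a \<le> \<bar>z - z0\<bar>" unfolding a_def using real_sqrt_le_mono by fastforce
    show "z \<in> {z0 - b..z0 - a} \<union> {z0 + a..z0 + b}" using u l by (cases "z \<ge> z0") auto
  qed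
  have "emeasure lborel {z::real. K - \<delta> \<le> \<sigma> * (z - z0)^2 \<and> \<sigma> * (z - z0)^2 \<le> K}
      \<le> emeasure lborel ({z0 - b..z0 - a} \<union> {z0 + a..z0 + b})"
    by (rule emeasure_mono[OF sub]) simp
  also have "\<dots> \<le> emeasure lborel {z0 - b..z0 - a} + emeasure lborel {z0 + a..z0 + b}"
    by (rule emeasure_subadditive) auto
  also have "\<dots> = ennreal (2 * (b - a))" using ab by (simp add: ennreal_plus[symmetric] del: ennreal_plus)
  also have "\<dots> \<le> ennreal (2 * \<delta> / (sqrt \<sigma> * sqrt K))"
  proof (rule ennreal_leI)
    have "b * b = K / \<sigma>" unfolding b_def using s K by simp
    moreover have "a * a = max (K - \<delta>) 0 / \<sigma>" unfolding a_def using s by simp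
    ultimately have "b * b - a * a \<le> \<delta> / \<sigma>" using s d by (simp add: field_simps) linarith?
    then have "(b - a) * b \<le> \<delta> / \<sigma>" using a0 ab
      by (smt (verit, ccfv_SIG) mult_left_mono mult_right_mono b0 left_diff_distrib)
    then have "b - a \<le> \<delta> / \<sigma> / b" using b0 by (subst pos_le_divide_eq) auto
    also have "\<delta> / \<sigma> / b = \<delta> / (sqrt \<sigma> * sqrt K)"
    proof -
      have "b = sqrt K / sqrt \<sigma>" unfolding b_def by (simp add: real_sqrt_divide)
      moreover have "sqrt \<sigma> * sqrt \<sigma> = \<sigma>" using s by simp
      moreover have "sqrt \<sigma> > 0" using s by simp
      ultimately have "\<sigma> * b = sqrt K * sqrt \<sigma>" by (metis nonzero_mult_div_cancel_left times_divide_eq_right mult.commute less_irrefl)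
      then show ?thesis by (simp add: mult.commute)
    qed
    finally show "2 * (b - a) \<le> 2 * \<delta> / (sqrt \<sigma> * sqrt K)" by simp
  qed
  finally show ?thesis .
qed

lemma interval_measure:
  fixes \<alpha> c :: real assumes a: "\<alpha> \<noteq> 0" and L: "L \<ge> 0"
  shows "emeasure lborel {y. \<bar>\<alpha> * y + c\<bar> \<le> L} = ennreal (2 * L / \<bar>\<alpha>\<bar>)"
proof -
  have e: "\<bar>\<alpha> * y + c\<bar> = \<bar>\<alpha>\<bar> * \<bar>y + c/\<alpha>\<bar>" for y
  proof -
    have "\<alpha> * y + c = \<alpha> * (y + c/\<alpha>)" using a by (simp add: distrib_left)
    then show ?thesis by (simp add: abs_mult)
  qed
  have "(\<bar>\<alpha> * y + c\<bar> \<le> L) = (\<bar>y + c/\<alpha>\<bar> \<le> L/\<bar>\<alpha>\<bar>)" for y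
    unfolding e using a by (simp add: pos_le_divide_eq mult.commute)
  then have "{y. \<bar>\<alpha> * y + c\<bar> \<le> L} = {-c/\<alpha> - L/\<bar>\<alpha>\<bar> .. -c/\<alpha> + L/\<bar>\<alpha>\<bar>}"
  proof (intro set_eqI)
    fix y assume h: "\<And>y. (\<bar>\<alpha> * y + c\<bar> \<le> L) = (\<bar>y + c/\<alpha>\<bar> \<le> L/\<bar>\<alpha>\<bar>)"
    have "(\<bar>y + c/\<alpha>\<bar> \<le> L/\<bar>\<alpha>\<bar>) = (-c/\<alpha> - L/\<bar>\<alpha>\<bar> \<le> y \<and> y \<le> -c/\<alpha> + L/\<bar>\<alpha>\<bar>)"
      by (simp only: abs_le_iff) linarith
    then show "y \<in> {y. \<bar>\<alpha> * y + c\<bar> \<le> L} \<longleftrightarrow> y \<in> {-c/\<alpha> - L/\<bar>\<alpha>\<bar> .. -c/\<alpha> + L/\<bar>\<alpha>\<bar>}"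
      using h[of y] by simp
  qed
  then show ?thesis using a L by simp
qed

lemma Kp_bound:
  fixes \<alpha> \<beta> p q t R2 \<epsilon> \<Lambda> d y \<sigma> :: real
  assumes a0: "\<alpha> \<noteq> 0" and ab: "\<alpha>^2 + \<beta>^2 = p^2" and p: "p > 0" and pq: "p^2 + q^2 = 1"
    and \<Lambda>: "\<Lambda> = p * sqrt (max (R2 + \<epsilon> - 25) 0)" and d: "d = \<Lambda> - 5*\<bar>q\<bar> - \<bar>t\<bar>" and d1: "d > 1"
    and \<sigma>: "\<sigma> = 1 + (\<beta>/\<alpha>)^2" and v: "\<bar>\<alpha> * y + q * t\<bar> \<le> 5"
  shows "R2 + \<epsilon> - t^2 - y^2/\<sigma> \<ge> \<Lambda> * d / p^2"
proof -
  define S where "S = sqrt (max (R2 + \<epsilon> - 25) 0)"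
  have S0: "S \<ge> 0" unfolding S_def by simp
  have \<Lambda>S: "\<Lambda> = p * S" using \<Lambda> S_def by simp
  have "\<Lambda> > 1" using d d1 by linarith
  then have "S > 0" using \<Lambda>S p S0 by (metis less_numeral_extra(4) mult_zero_right order_less_le not_one_less_zero)
  then have "max (R2 + \<epsilon> - 25) 0 > 0" unfolding S_def by simp
  then have SS: "S^2 = R2 + \<epsilon> - 25" unfolding S_def by simp
  define v where "v = \<alpha> * y + q * t"
  have v5: "\<bar>v\<bar> \<le> 5" using v v_def by simp
  have as: "\<alpha>^2 * \<sigma> = p^2" using \<sigma> ab a0 by (simp add: field_simps power2_eq_square)
  have yy: "y^2/\<sigma> = (v - q*t)^2 / p^2"
  proof -
    have "(v - q*t)^2 = \<alpha>^2 * y^2" unfolding v_def by (simp add: power2_eq_square)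
    moreover have "\<sigma> > 0" using \<sigma> by (simp add: add_pos_nonneg)
    ultimately show ?thesis using as p by (simp add: field_simps)
  qed
  have key: "p^2 * t^2 + (v - q*t)^2 \<le> 25 * p^2 + p * S * (5 * \<bar>q\<bar> + \<bar>t\<bar>)"
  proof -
    have p2: "p^2 = 1 - q^2" using pq by simp
    have "p^2 * t^2 + (v - q*t)^2 = (1 - q^2) * t^2 + (v - q*t)^2" by (simp only: p2)
    also have "\<dots> = t^2 - 2 * q * v * t + v^2" by (simp add: power2_eq_square algebra_simps)
    finally have l: "p^2 * t^2 + (v - q*t)^2 = t^2 - 2 * q * v * t + v^2" .
    have "- (2 * q * v * t) \<le> 2 * \<bar>q\<bar> * \<bar>v\<bar> * \<bar>t\<bar>" by (simp add: abs_mult[symmetric] abs_le_iff)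
    also have "\<dots> \<le> 10 * \<bar>q\<bar> * \<bar>t\<bar>"
    proof -
      have "\<bar>v\<bar> * (\<bar>q\<bar> * \<bar>t\<bar>) \<le> 5 * (\<bar>q\<bar> * \<bar>t\<bar>)" by (rule mult_right_mono[OF v5]) simp
      then show ?thesis by (simp add: mult.assoc mult.left_commute mult.commute)
    qed
    finally have qq: "- (2 * q * v * t) \<le> 10 * \<bar>q\<bar> * \<bar>t\<bar>" .
    have A: "t^2 - 2 * q * v * t + v^2 \<le> 25 + 10 * \<bar>q\<bar> * \<bar>t\<bar> + t^2"
    proof -
      have "v^2 \<le> 25" using abs_le_square_iff[of v 5] v5 by simp
      then show ?thesis using qq by linarith
    qed
    have B: "p * S \<ge> 5 * \<bar>q\<bar> + \<bar>t\<bar>" using d d1 \<Lambda>S by linarith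
    have "(5 * \<bar>q\<bar> + \<bar>t\<bar>) * (5 * \<bar>q\<bar> + \<bar>t\<bar>) \<le> p * S * (5 * \<bar>q\<bar> + \<bar>t\<bar>)"
      by (rule mult_right_mono[OF B]) simp
    moreover have "(5 * \<bar>q\<bar> + \<bar>t\<bar>) * (5 * \<bar>q\<bar> + \<bar>t\<bar>) = 25 * q^2 + 10 * \<bar>q\<bar> * \<bar>t\<bar> + t^2"
      by (simp add: power2_eq_square algebra_simps)
    ultimately show ?thesis using l A pq by (simp add: algebra_simps)
  qed
  have dd: "d = p * S - (5 * \<bar>q\<bar> + \<bar>t\<bar>)" using d \<Lambda>S by linarith
  have "\<Lambda> * d = p^2 * S^2 - p * S * (5 * \<bar>q\<bar> + \<bar>t\<bar>)" unfolding \<Lambda>S dd by (simp add: power2_eq_square algebra_simps)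
  also have "\<dots> \<le> p^2 * (R2 + \<epsilon>) - p^2 * t^2 - (v - q*t)^2" 
  proof -
    have "R2 + \<epsilon> = S^2 + 25" using SS by simp
    then have e: "p^2 * (R2 + \<epsilon>) = p^2 * S^2 + 25 * p^2" by (simp add: algebra_simps)
    show ?thesis using key e by linarith
  qed
  also have "\<dots> = p^2 * (R2 + \<epsilon> - t^2 - y^2/\<sigma>)" using yy p by (simp add: field_simps)
  finally show ?thesis using p by (simp add: field_simps mult.commute)
qed

lemma nn_integral_translate:
  fixes f :: "real \<Rightarrow> ennreal" assumes [measurable]: "f \<in> borel_measurable borel"
  shows "(\<integral>\<^sup>+x. f (x + c) \<partial>lborel) = (\<integral>\<^sup>+x. f x \<partial>lborel)"
proof -
  have "(\<integral>\<^sup>+x. f x \<partial>lborel) = (\<integral>\<^sup>+x. f x \<partial>(distr lborel borel ((+) c)))"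
    by (simp add: lborel_distr_plus)
  also have "\<dots> = (\<integral>\<^sup>+x. f (c + x) \<partial>lborel)"
    by (subst nn_integral_distr) auto
  finally show ?thesis by (simp add: add.commute)
qed

lemma core:
  fixes \<alpha> \<beta> p q t R2 \<epsilon> \<Lambda> d :: real
  assumes a0: "\<alpha> \<noteq> 0" and ab: "\<alpha>^2 + \<beta>^2 = p^2" and p: "p > 0" and pq: "p^2 + q^2 = 1"
    and e: "\<epsilon> > 0"
    and \<Lambda>: "\<Lambda> = p * sqrt (max (R2 + \<epsilon> - 25) 0)" and d: "d = \<Lambda> - 5*\<bar>q\<bar> - \<bar>t\<bar>" and d1: "d > 1"
  shows "(\<integral>\<^sup>+x2. \<integral>\<^sup>+x1. indicator {x::real\<times>real. \<bar>(fst x)^2 + (snd x)^2 + t^2 - R2\<bar> \<le> \<epsilon> \<and> \<bar>\<alpha> * fst x + \<beta> * snd x + q * t\<bar> \<le> 5} (x1, x2) \<partial>lborel \<partial>lborel)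
     \<le> ennreal (40 * \<epsilon> / sqrt (\<Lambda> * d))"
proof -
  define B where "B = {x::real\<times>real. \<bar>(fst x)^2 + (snd x)^2 + t^2 - R2\<bar> \<le> \<epsilon> \<and> \<bar>\<alpha> * fst x + \<beta> * snd x + q * t\<bar> \<le> 5}"
  define k where "k = \<beta> / \<alpha>"
  define \<sigma> where "\<sigma> = 1 + k^2"
  define \<kappa> where "\<kappa> = \<Lambda> * d / p^2"
  define c0 where "c0 = 4 * \<epsilon> / (sqrt \<sigma> * sqrt \<kappa>)"
  have \<sigma>0: "\<sigma> > 0" unfolding \<sigma>_def by (simp add: add_pos_nonneg)
  have \<Lambda>1: "\<Lambda> > 1" using d d1 by linarith
  have \<kappa>0: "\<kappa> > 0" unfolding \<kappa>_def using \<Lambda>1 d1 p by simp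
  have "closed B" unfolding B_def
    by (intro closed_Collect_conj closed_Collect_le continuous_intros)
  then have Bm[measurable]: "B \<in> sets borel" by (rule borel_closed)
  have step1: "(\<integral>\<^sup>+x1. indicator B (x1, x2) \<partial>lborel) = (\<integral>\<^sup>+y. indicator B (y - k * x2, x2) \<partial>lborel)" for x2
    using nn_integral_translate[of "\<lambda>x1. indicator B (x1, x2)" "- (k * x2)"] by simp
  have "(\<integral>\<^sup>+x2. \<integral>\<^sup>+x1. indicator B (x1, x2) \<partial>lborel \<partial>lborel)
      = (\<integral>\<^sup>+x2. \<integral>\<^sup>+y. indicator B (y - k * x2, x2) \<partial>lborel \<partial>lborel)"
    by (simp add: step1)
  also have "\<dots> = (\<integral>\<^sup>+y. \<integral>\<^sup>+x2. indicator B (y - k * x2, x2) \<partial>lborel \<partial>lborel)"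
    by (rule lborel_pair.Fubini') measurable
  also have "\<dots> \<le> (\<integral>\<^sup>+y. indicator {y. \<bar>\<alpha> * y + q * t\<bar> \<le> 5} y * ennreal c0 \<partial>lborel)"
  proof (rule nn_integral_mono)
    fix y :: real
    show "(\<integral>\<^sup>+x2. indicator B (y - k * x2, x2) \<partial>lborel) \<le> indicator {y. \<bar>\<alpha> * y + q * t\<bar> \<le> 5} y * ennreal c0"
    proof (cases "\<bar>\<alpha> * y + q * t\<bar> \<le> 5")
      case False
      have "\<alpha> * (y - k * x2) + \<beta> * x2 = \<alpha> * y" for x2 unfolding k_def using a0 by (simp add: algebra_simps)
      then have "indicator B (y - k * x2, x2) = (0::ennreal)" for x2
        using False unfolding B_def by (simp add: indicator_def)
      then show ?thesis by simp
    next
      case True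
      define Kp where "Kp = R2 + \<epsilon> - t^2 - y^2/\<sigma>"
      have Kk: "Kp \<ge> \<kappa>" unfolding Kp_def \<kappa>_def
        by (rule Kp_bound[OF a0 ab p pq \<Lambda> d d1 _ True]) (simp add: \<sigma>_def k_def)
      define x0 where "x0 = k * y / \<sigma>"
      have sub: "{x2. (y - k * x2, x2) \<in> B} \<subseteq> {z. Kp - 2 * \<epsilon> \<le> \<sigma> * (z - x0)^2 \<and> \<sigma> * (z - x0)^2 \<le> Kp}"
      proof
        fix z assume "z \<in> {x2. (y - k * x2, x2) \<in> B}"
        then have h: "\<bar>(y - k * z)^2 + z^2 + t^2 - R2\<bar> \<le> \<epsilon>" unfolding B_def by simp
        have sx: "\<sigma> * x0 = k * y" unfolding x0_def using \<sigma>0 by simp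
        have A1: "\<sigma> * (z - x0)^2 = \<sigma> * z^2 - 2 * z * (\<sigma> * x0) + (\<sigma> * x0) * x0"
          by (simp add: power2_eq_square algebra_simps)
        have A2: "(k * y) * x0 + y^2/\<sigma> = y^2"
        proof -
          have "(k * y) * x0 + y^2/\<sigma> = (k^2 + 1) * y^2 / \<sigma>" unfolding x0_def
            by (simp add: power2_eq_square add_divide_distrib distrib_right)
          also have "\<dots> = y^2" using \<sigma>0 unfolding \<sigma>_def by (simp add: add.commute)
          finally show ?thesis .
        qed
        have idq: "(y - k * z)^2 + z^2 = \<sigma> * (z - x0)^2 + y^2/\<sigma>"
          unfolding A1 sx using A2 unfolding \<sigma>_def by (simp add: power2_eq_square algebra_simps)
        show "z \<in> {z. Kp - 2 * \<epsilon> \<le> \<sigma> * (z - x0)^2 \<and> \<sigma> * (z - x0)^2 \<le> Kp}"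
          using h unfolding idq Kp_def abs_le_iff by simp
      qed
      have "(\<integral>\<^sup>+x2. indicator B (y - k * x2, x2) \<partial>lborel) = emeasure lborel {x2. (y - k * x2, x2) \<in> B}"
      proof -
        have "(\<lambda>x2. indicator B (y - k * x2, x2) :: ennreal) = indicator {x2. (y - k * x2, x2) \<in> B}"
          by (auto simp: indicator_def)
        moreover have "{x2. (y - k * x2, x2) \<in> B} \<in> sets lborel" by measurable
        ultimately show ?thesis by simp
      qed
      also have "\<dots> \<le> emeasure lborel {z. Kp - 2 * \<epsilon> \<le> \<sigma> * (z - x0)^2 \<and> \<sigma> * (z - x0)^2 \<le> Kp}"
        by (rule emeasure_mono[OF sub]) measurable
      also have "\<dots> \<le> ennreal (2 * (2 * \<epsilon>) / (sqrt \<sigma> * sqrt Kp))"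
        by (rule sec_bound) (use \<sigma>0 \<kappa>0 Kk e in auto)
      also have "\<dots> \<le> ennreal c0"
      proof (rule ennreal_leI)
        have "sqrt \<kappa> \<le> sqrt Kp" using Kk by simp
        moreover have "sqrt \<kappa> > 0" using \<kappa>0 by simp
        ultimately have "sqrt \<sigma> * sqrt \<kappa> \<le> sqrt \<sigma> * sqrt Kp" using \<sigma>0 by simp
        moreover have "0 < (sqrt \<sigma> * sqrt Kp) * (sqrt \<sigma> * sqrt \<kappa>)" using \<sigma>0 \<kappa>0 Kk by simp
        ultimately have "4 * \<epsilon> / (sqrt \<sigma> * sqrt Kp) \<le> 4 * \<epsilon> / (sqrt \<sigma> * sqrt \<kappa>)"
          using e by (intro divide_left_mono) auto
        then show "2 * (2 * \<epsilon>) / (sqrt \<sigma> * sqrt Kp) \<le> c0" unfolding c0_def by simp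
      qed
      finally show ?thesis using True by simp
    qed
  qed
  also have "\<dots> = ennreal c0 * emeasure lborel {y. \<bar>\<alpha> * y + q * t\<bar> \<le> 5}"
    by (subst nn_integral_multc) (auto simp: mult.commute)
  also have "\<dots> = ennreal c0 * ennreal (2 * 5 / \<bar>\<alpha>\<bar>)"
    using interval_measure[OF a0, of 5 "q * t"] by simp
  also have "\<dots> = ennreal (c0 * (2 * 5 / \<bar>\<alpha>\<bar>))"
    by (rule ennreal_mult[symmetric]) (use e \<sigma>0 \<kappa>0 in \<open>auto simp: c0_def\<close>)
  also have "c0 * (2 * 5 / \<bar>\<alpha>\<bar>) = 40 * \<epsilon> / sqrt (\<Lambda> * d)"
  proof -
    have s1: "\<bar>\<alpha>\<bar> * sqrt \<sigma> = p"
    proof -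
      have "(\<bar>\<alpha>\<bar> * sqrt \<sigma>)^2 = p^2" using ab a0 \<sigma>0 unfolding \<sigma>_def k_def
        by (simp add: power_mult_distrib field_simps power2_eq_square)
      moreover have nn: "0 \<le> \<bar>\<alpha>\<bar> * sqrt \<sigma>" using \<sigma>0 by simp
      ultimately show ?thesis using power2_eq_iff_nonneg[OF nn, of p] p by simp
    qed
    have s2: "p * sqrt \<kappa> = sqrt (\<Lambda> * d)"
    proof -
      have "sqrt \<kappa> = sqrt (\<Lambda> * d) / p" unfolding \<kappa>_def using p by (simp add: real_sqrt_divide)
      then show ?thesis using p by simp
    qed
    have "c0 * (2 * 5 / \<bar>\<alpha>\<bar>) = 40 * \<epsilon> / ((\<bar>\<alpha>\<bar> * sqrt \<sigma>) * sqrt \<kappa>)"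
      unfolding c0_def by (simp add: field_simps)
    also have "\<dots> = 40 * \<epsilon> / sqrt (\<Lambda> * d)" using s1 s2 by simp
    finally show ?thesis .
  qed
  finally show ?thesis unfolding B_def .
qed

definition Bt :: "real \<Rightarrow> real \<Rightarrow> real \<Rightarrow> real \<Rightarrow> real \<Rightarrow> real \<Rightarrow> (real \<times> real) set" where
  "Bt e1 e2 e3 R2 \<epsilon> t = {x::real\<times>real. \<bar>(fst x)^2 + (snd x)^2 + t^2 - R2\<bar> \<le> \<epsilon> \<and> \<bar>e1 * fst x + e2 * snd x + e3 * t\<bar> \<le> 5}"

lemma Bt_closed: "closed (Bt e1 e2 e3 R2 \<epsilon> t)"
  unfolding Bt_def by (intro closed_Collect_conj closed_Collect_le continuous_intros)

lemma Bt_sets[measurable]: "Bt e1 e2 e3 R2 \<epsilon> t \<in> sets borel"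
  by (rule borel_closed[OF Bt_closed])

lemma emeasure_as_iterated:
  fixes A :: "(real \<times> real) set" assumes [measurable]: "A \<in> sets borel"
  shows "emeasure lborel A = (\<integral>\<^sup>+x2. \<integral>\<^sup>+x1. indicator A (x1, x2) \<partial>lborel \<partial>lborel)"
    and "emeasure lborel A = (\<integral>\<^sup>+x1. \<integral>\<^sup>+x2. indicator A (x1, x2) \<partial>lborel \<partial>lborel)"
proof -
  have "emeasure lborel A = (\<integral>\<^sup>+z. indicator A z \<partial>lborel)" by simp
  also have "\<dots> = (\<integral>\<^sup>+z. indicator A z \<partial>(lborel \<Otimes>\<^sub>M lborel))" by (simp only: lborel_prod)
  finally have E: "emeasure lborel A = (\<integral>\<^sup>+z. indicator A z \<partial>(lborel \<Otimes>\<^sub>M lborel))" .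
  have M: "indicator A \<in> borel_measurable (lborel \<Otimes>\<^sub>M lborel)" by (simp only: lborel_prod) measurable
  show "emeasure lborel A = (\<integral>\<^sup>+x2. \<integral>\<^sup>+x1. indicator A (x1, x2) \<partial>lborel \<partial>lborel)"
    unfolding E using lborel_pair.nn_integral_snd[OF M] by simp
  show "emeasure lborel A = (\<integral>\<^sup>+x1. \<integral>\<^sup>+x2. indicator A (x1, x2) \<partial>lborel \<partial>lborel)"
    unfolding E using lborel.nn_integral_fst[OF M] by simp
qed

lemma Mbound:
  fixes e1 e2 e3 R2 \<epsilon> t p \<Lambda> d :: real
  assumes e: "e1^2 + e2^2 + e3^2 = 1" and p: "p = sqrt (e1^2 + e2^2)" and \<epsilon>: "\<epsilon> > 0"
    and \<Lambda>: "\<Lambda> = p * sqrt (max (R2 + \<epsilon> - 25) 0)" and d: "d = \<Lambda> - 5*\<bar>e3\<bar> - \<bar>t\<bar>" and d1: "d > 1"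
  shows "emeasure lborel (Bt e1 e2 e3 R2 \<epsilon> t) \<le> ennreal (40 * \<epsilon> / sqrt (\<Lambda> * d))"
proof -
  have \<Lambda>1: "\<Lambda> > 1" using d d1 by linarith
  have p0: "p \<ge> 0" using p by simp
  have pp: "p > 0"
  proof (rule ccontr)
    assume "\<not> p > 0" then have "p = 0" using p0 by simp
    then show False using \<Lambda>1 \<Lambda> by simp
  qed
  have p2: "p^2 = e1^2 + e2^2" using p by simp
  have pq: "p^2 + e3^2 = 1" using p2 e by simp
  show ?thesis
  proof (cases "e1 = 0")
    case False
    have "emeasure lborel (Bt e1 e2 e3 R2 \<epsilon> t) =
        (\<integral>\<^sup>+x2. \<integral>\<^sup>+x1. indicator (Bt e1 e2 e3 R2 \<epsilon> t) (x1, x2) \<partial>lborel \<partial>lborel)"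
      by (rule emeasure_as_iterated(1)) measurable
    also have "\<dots> \<le> ennreal (40 * \<epsilon> / sqrt (\<Lambda> * d))"
      unfolding Bt_def by (rule core[OF False p2[symmetric] pp pq \<epsilon> \<Lambda> d d1])
    finally show ?thesis .
  next
    case True
    then have e20: "e2 \<noteq> 0" using pp p by auto
    have "emeasure lborel (Bt e1 e2 e3 R2 \<epsilon> t) =
        (\<integral>\<^sup>+x1. \<integral>\<^sup>+x2. indicator (Bt e1 e2 e3 R2 \<epsilon> t) (x1, x2) \<partial>lborel \<partial>lborel)"
      by (rule emeasure_as_iterated(2)) measurable
    also have "\<dots> = (\<integral>\<^sup>+x1. \<integral>\<^sup>+x2. indicator {x::real\<times>real. \<bar>(fst x)^2 + (snd x)^2 + t^2 - R2\<bar> \<le> \<epsilon> \<and> \<bar>e2 * fst x + e1 * snd x + e3 * t\<bar> \<le> 5} (x2, x1) \<partial>lborel \<partial>lborel)"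
      unfolding Bt_def using True by (simp add: indicator_def add.commute)
    also have "\<dots> \<le> ennreal (40 * \<epsilon> / sqrt (\<Lambda> * d))"
      by (rule core[OF e20 _ pp pq \<epsilon> \<Lambda> d d1]) (simp add: p2 add.commute)
    finally show ?thesis .
  qed
qed

lemma annulus_bound:
  fixes e1 e2 e3 R2 \<epsilon> t :: real assumes \<epsilon>: "\<epsilon> > 0"
  shows "emeasure lborel (Bt e1 e2 e3 R2 \<epsilon> t) \<le> ennreal (2 * pi * \<epsilon>)"
proof -
  define R1 where "R1 = sqrt (max (R2 - t^2 + \<epsilon>) 0)"
  define R0 where "R0 = sqrt (max (R2 - t^2 - \<epsilon>) 0)"
  have R0: "R0 \<ge> 0" and R1: "R1 \<ge> 0" unfolding R0_def R1_def by auto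
  have sub: "Bt e1 e2 e3 R2 \<epsilon> t \<subseteq> cball 0 R1 - ball 0 R0"
  proof
    fix x :: "real \<times> real" assume "x \<in> Bt e1 e2 e3 R2 \<epsilon> t"
    then have h: "\<bar>(fst x)^2 + (snd x)^2 + t^2 - R2\<bar> \<le> \<epsilon>" unfolding Bt_def by simp
    obtain x1 x2 where x: "x = (x1, x2)" by (cases x)
    have nx: "norm x = sqrt (x1^2 + x2^2)" unfolding x by (simp add: norm_Pair)
    have "x1^2 + x2^2 \<le> max (R2 - t^2 + \<epsilon>) 0" using h x by (auto simp: abs_le_iff le_max_iff_disj)
    then have a: "norm x \<le> R1" unfolding nx R1_def by (rule real_sqrt_le_mono)
    have "max (R2 - t^2 - \<epsilon>) 0 \<le> x1^2 + x2^2" using h x by (auto simp: abs_le_iff max_def)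
    then have b: "R0 \<le> norm x" unfolding nx R0_def by (rule real_sqrt_le_mono)
    show "x \<in> cball 0 R1 - ball 0 R0" using a b by (simp add: dist_norm)
  qed
  have "emeasure lborel (Bt e1 e2 e3 R2 \<epsilon> t) \<le> emeasure lborel (cball (0::real\<times>real) R1 - ball 0 R0)"
    by (rule emeasure_mono[OF sub]) simp
  also have "\<dots> = emeasure lborel (cball (0::real\<times>real) R1) - emeasure lborel (ball (0::real\<times>real) R0)"
  proof (rule emeasure_Diff)
    show "emeasure lborel (ball (0::real\<times>real) R0) \<noteq> \<infinity>" using ball_area(2)[OF R0] by simp
    show "ball (0::real\<times>real) R0 \<subseteq> cball 0 R1"
    proof
      fix y :: "real\<times>real" assume "y \<in> ball 0 R0"
      moreover have "R0 \<le> R1" unfolding R0_def R1_def by (intro real_sqrt_le_mono) (use \<epsilon> in auto)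
      ultimately show "y \<in> cball 0 R1" by simp
    qed
  qed auto
  also have "\<dots> = ennreal (pi * R1^2) - ennreal (pi * R0^2)" using ball_area R0 R1 by simp
  also have "\<dots> = ennreal (pi * R1^2 - pi * R0^2)" by (rule ennreal_minus) simp
  also have "\<dots> \<le> ennreal (2 * pi * \<epsilon>)"
  proof (rule ennreal_leI)
    have "R1^2 = max (R2 - t^2 + \<epsilon>) 0" unfolding R1_def by simp
    moreover have "R0^2 = max (R2 - t^2 - \<epsilon>) 0" unfolding R0_def by simp
    ultimately have "R1^2 - R0^2 \<le> 2 * \<epsilon>" using \<epsilon> by linarith
    then have "pi * (R1^2 - R0^2) \<le> pi * (2 * \<epsilon>)" by (rule mult_left_mono) simp
    then show "pi * R1^2 - pi * R0^2 \<le> 2 * pi * \<epsilon>" by (simp add: algebra_simps)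
  qed
  finally show ?thesis .
qed

lemma cs3:
  fixes a1 a2 a3 x1 x2 x3 :: real
  shows "(a1 * x1 + a2 * x2 + a3 * x3)^2 \<le> (a1^2 + a2^2 + a3^2) * (x1^2 + x2^2 + x3^2)"
proof -
  have "(a1^2 + a2^2 + a3^2) * (x1^2 + x2^2 + x3^2) - (a1 * x1 + a2 * x2 + a3 * x3)^2
      = (a1 * x2 - a2 * x1)^2 + (a1 * x3 - a3 * x1)^2 + (a2 * x3 - a3 * x2)^2"
    by (simp add: power2_eq_square algebra_simps)
  moreover have "(a1 * x2 - a2 * x1)^2 + (a1 * x3 - a3 * x1)^2 + (a2 * x3 - a3 * x2)^2 \<ge> 0" by simp
  ultimately show ?thesis by linarith
qed

lemma Bt_empty:
  fixes e1 e2 e3 R2 \<epsilon> t p :: real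
  assumes e: "e1^2 + e2^2 + e3^2 = 1" and p: "p = sqrt (e1^2 + e2^2)" and \<epsilon>: "\<epsilon> > 0" and R2: "R2 \<ge> 0"
    and t: "\<bar>t\<bar> > 5 * \<bar>e3\<bar> + p * sqrt (R2 + \<epsilon>)"
  shows "Bt e1 e2 e3 R2 \<epsilon> t = {}"
proof (rule ccontr)
  assume "Bt e1 e2 e3 R2 \<epsilon> t \<noteq> {}"
  then obtain x where "x \<in> Bt e1 e2 e3 R2 \<epsilon> t" by auto
  then obtain x1 x2 where h1: "\<bar>x1^2 + x2^2 + t^2 - R2\<bar> \<le> \<epsilon>" and h2: "\<bar>e1 * x1 + e2 * x2 + e3 * t\<bar> \<le> 5"
    unfolding Bt_def by (cases x) auto
  define v where "v = e1 * x1 + e2 * x2 + e3 * t"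
  have p2: "p^2 = e1^2 + e2^2" using p by simp
  have "t - e3 * v = (- e3 * e1) * x1 + (- e3 * e2) * x2 + (e1^2 + e2^2) * t"
  proof -
    have ee: "1 - e3^2 = e1^2 + e2^2" using e by simp
    have "t - e3 * v = (1 - e3^2) * t + (- e3 * e1) * x1 + (- e3 * e2) * x2" unfolding v_def by (simp add: power2_eq_square algebra_simps)
    then show ?thesis unfolding ee by simp
  qed
  then have "(t - e3 * v)^2 \<le> ((- e3 * e1)^2 + (- e3 * e2)^2 + (e1^2 + e2^2)^2) * (x1^2 + x2^2 + t^2)"
    using cs3[of "- e3 * e1" x1 "- e3 * e2" x2 "e1^2 + e2^2" t] by simp
  also have "(- e3 * e1)^2 + (- e3 * e2)^2 + (e1^2 + e2^2)^2 = p^2"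
  proof -
    have "(- e3 * e1)^2 + (- e3 * e2)^2 + (e1^2 + e2^2)^2 = (e1^2 + e2^2) * (e1^2 + e2^2 + e3^2)"
      by (simp add: power2_eq_square algebra_simps)
    then show ?thesis using e p2 by simp
  qed
  also have "p^2 * (x1^2 + x2^2 + t^2) \<le> p^2 * (R2 + \<epsilon>)"
    using h1 by (intro mult_left_mono) (auto simp: abs_le_iff)
  finally have sq: "(t - e3 * v)^2 \<le> (p * sqrt (R2 + \<epsilon>))^2" using R2 \<epsilon> by (simp add: power_mult_distrib)
  have nn: "0 \<le> p * sqrt (R2 + \<epsilon>)" using p R2 \<epsilon> by simp
  have "\<bar>t - e3 * v\<bar> \<le> \<bar>p * sqrt (R2 + \<epsilon>)\<bar>" using abs_le_square_iff[of "t - e3 * v" "p * sqrt (R2 + \<epsilon>)"] sq by simp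
  then have "\<bar>t - e3 * v\<bar> \<le> p * sqrt (R2 + \<epsilon>)" using nn by simp
  moreover have "\<bar>e3 * v\<bar> \<le> 5 * \<bar>e3\<bar>"
  proof -
    have "\<bar>v\<bar> \<le> 5" using h2 v_def by simp
    then have "\<bar>e3\<bar> * \<bar>v\<bar> \<le> \<bar>e3\<bar> * 5" by (rule mult_left_mono) simp
    then show ?thesis by (simp add: abs_mult mult.commute)
  qed
  ultimately show False using t by linarith
qed

lemma finite_int_band: "finite {n::int. \<bar>real_of_int n - c\<bar> \<le> B}"
proof (rule finite_subset[of _ "{\<lfloor>c - B\<rfloor> .. \<lceil>c + B\<rceil>}"])
  show "{n::int. \<bar>real_of_int n - c\<bar> \<le> B} \<subseteq> {\<lfloor>c - B\<rfloor>..\<lceil>c + B\<rceil>}"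
  proof
    fix n :: int assume "n \<in> {n::int. \<bar>real_of_int n - c\<bar> \<le> B}"
    then have "c - B \<le> real_of_int n" "real_of_int n \<le> c + B" by (auto simp: abs_le_iff)
    then show "n \<in> {\<lfloor>c - B\<rfloor>..\<lceil>c + B\<rceil>}" by (auto simp: floor_le_iff le_ceiling_iff)
  qed
qed simp

lemma int_interval_eq: "{n::int. x \<le> real_of_int n \<and> real_of_int n \<le> x + L} = {\<lceil>x\<rceil> .. \<lfloor>x + L\<rfloor>}"
  by (auto simp: ceiling_le_iff le_floor_iff)

lemma finite_int_interval: "finite {n::int. x \<le> real_of_int n \<and> real_of_int n \<le> x + L}"
  unfolding int_interval_eq by simp

lemma card_int_interval: "card {n::int. x \<le> real_of_int n \<and> real_of_int n \<le> x + L} \<le> nat \<lfloor>L\<rfloor> + 1"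
proof -
  have "{n::int. x \<le> real_of_int n \<and> real_of_int n \<le> x + L} = {\<lceil>x\<rceil> .. \<lfloor>x + L\<rfloor>}"
    by (rule int_interval_eq)
  moreover have "card {\<lceil>x\<rceil> .. \<lfloor>x + L\<rfloor>} \<le> nat \<lfloor>L\<rfloor> + 1"
  proof -
    have "\<lfloor>x + L\<rfloor> \<le> \<lfloor>x\<rfloor> + \<lfloor>L\<rfloor> + 1" by linarith
    moreover have "\<lfloor>x\<rfloor> \<le> \<lceil>x\<rceil>" by (simp add: floor_le_ceiling)
    ultimately have "\<lfloor>x + L\<rfloor> + 1 - \<lceil>x\<rceil> \<le> \<lfloor>L\<rfloor> + 1" by linarith
    then show ?thesis by (simp add: nat_le_iff) linarith?
  qed
  ultimately show ?thesis by simp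
qed

lemma card_E: "card {n::int. A \<le> \<bar>real_of_int n - c\<bar> \<and> \<bar>real_of_int n - c\<bar> \<le> A + 16} \<le> 34"
proof -
  let ?E = "{n::int. A \<le> \<bar>real_of_int n - c\<bar> \<and> \<bar>real_of_int n - c\<bar> \<le> A + 16}"
  let ?P = "{n::int. c + A \<le> real_of_int n \<and> real_of_int n \<le> (c + A) + 16}"
  let ?N = "{n::int. c - A - 16 \<le> real_of_int n \<and> real_of_int n \<le> (c - A - 16) + 16}"
  have "?E \<subseteq> ?P \<union> ?N" by (auto simp: abs_if split: if_splits)
  moreover have "finite ?P" "finite ?N" by (rule finite_int_interval)+
  ultimately have "card ?E \<le> card (?P \<union> ?N)" by (intro card_mono) auto
  also have "\<dots> \<le> card ?P + card ?N" by (rule card_Un_le)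
  also have "\<dots> \<le> 17 + 17" using card_int_interval[of "c + A" 16] card_int_interval[of "c - A - 16" 16] by simp
  finally show ?thesis by simp
qed

lemma sum_floor:
  fixes N :: "int set" and c0 \<sigma> \<Lambda> :: real
  assumes \<sigma>: "\<sigma> = 1 \<or> \<sigma> = -1" and fin: "finite N" and \<Lambda>0: "\<Lambda> \<ge> 0"
    and b: "\<And>n. n \<in> N \<Longrightarrow> 1 < c0 + \<sigma> * real_of_int n \<and> c0 + \<sigma> * real_of_int n \<le> \<Lambda>"
  shows "(\<Sum>n\<in>N. 1 / sqrt (c0 + \<sigma> * real_of_int n)) \<le> 2 * sqrt \<Lambda>"
proof -
  define h where "h n = nat \<lfloor>c0 + \<sigma> * real_of_int n\<rfloor>" for n
  define K where "K = nat \<lfloor>\<Lambda>\<rfloor>"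
  have inj: "inj_on h N"
  proof
    fix n n' assume n: "n \<in> N" and n': "n' \<in> N" and eq: "h n = h n'"
    have f1: "\<lfloor>c0 + \<sigma> * real_of_int n\<rfloor> \<ge> 1" and f2: "\<lfloor>c0 + \<sigma> * real_of_int n'\<rfloor> \<ge> 1"
      using b[OF n] b[OF n'] by (auto simp: le_floor_iff)
    have "int (h n) = \<lfloor>c0 + \<sigma> * real_of_int n\<rfloor>" unfolding h_def using f1 by simp
    moreover have "int (h n') = \<lfloor>c0 + \<sigma> * real_of_int n'\<rfloor>" unfolding h_def using f2 by simp
    ultimately have "\<lfloor>c0 + \<sigma> * real_of_int n\<rfloor> = \<lfloor>c0 + \<sigma> * real_of_int n'\<rfloor>" using eq by simp
    then have "\<bar>(c0 + \<sigma> * real_of_int n) - (c0 + \<sigma> * real_of_int n')\<bar> < 1" by linarith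
    then have "\<bar>real_of_int (n - n')\<bar> < 1" using \<sigma> by (auto simp: algebra_simps)
    then show "n = n'" by linarith
  qed
  have img: "h ` N \<subseteq> {1..K}"
  proof
    fix k assume "k \<in> h ` N"
    then obtain n where n: "n \<in> N" and k: "k = h n" by auto
    have f1: "1 \<le> \<lfloor>c0 + \<sigma> * real_of_int n\<rfloor>" using b[OF n] by (simp add: le_floor_iff)
    have f2: "\<lfloor>c0 + \<sigma> * real_of_int n\<rfloor> \<le> \<lfloor>\<Lambda>\<rfloor>" using b[OF n] by (simp add: floor_mono)
    have "1 \<le> nat \<lfloor>c0 + \<sigma> * real_of_int n\<rfloor>" using f1 by linarith
    moreover have "nat \<lfloor>c0 + \<sigma> * real_of_int n\<rfloor> \<le> nat \<lfloor>\<Lambda>\<rfloor>" using f2 by (rule nat_mono)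
    ultimately show "k \<in> {1..K}" unfolding k h_def K_def by auto
  qed
  have "(\<Sum>n\<in>N. 1 / sqrt (c0 + \<sigma> * real_of_int n)) \<le> (\<Sum>n\<in>N. 1 / sqrt (real (h n)))"
  proof (rule sum_mono)
    fix n assume n: "n \<in> N"
    have h1: "1 \<le> \<lfloor>c0 + \<sigma> * real_of_int n\<rfloor>" using b[OF n] by (simp add: le_floor_iff)
    have "real (h n) = real_of_int \<lfloor>c0 + \<sigma> * real_of_int n\<rfloor>" unfolding h_def using h1 by simp
    then have "real (h n) \<le> c0 + \<sigma> * real_of_int n" "real (h n) \<ge> 1" using h1 by linarith+
    then show "1 / sqrt (c0 + \<sigma> * real_of_int n) \<le> 1 / sqrt (real (h n))"
      by (intro divide_left_mono real_sqrt_le_mono) auto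
  qed
  also have "\<dots> = (\<Sum>k\<in>h ` N. 1 / sqrt (real k))" by (rule sum.reindex[OF inj, symmetric, unfolded comp_def])
  also have "\<dots> \<le> (\<Sum>k\<in>{1..K}. 1 / sqrt (real k))" by (rule sum_mono2[OF _ img]) auto
  also have "\<dots> \<le> 2 * sqrt (real K)" by (rule sum_inv_sqrt)
  also have "\<dots> \<le> 2 * sqrt \<Lambda>"
  proof -
    have "real K = real_of_int \<lfloor>\<Lambda>\<rfloor>" unfolding K_def using \<Lambda>0 by simp
    then have "real K \<le> \<Lambda>" by linarith
    then show ?thesis by simp
  qed
  finally show ?thesis .
qed

lemma nn_count_finite:
  fixes f :: "int \<Rightarrow> real"
  assumes fin: "finite X" and z: "\<And>n. n \<notin> X \<Longrightarrow> f n = 0" and nn: "\<And>n. f n \<ge> 0"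
  shows "(\<integral>\<^sup>+n. ennreal (f n) \<partial>count_space UNIV) = ennreal (\<Sum>n\<in>X. f n)"
proof -
  have "(\<integral>\<^sup>+n. ennreal (f n) \<partial>count_space UNIV) = (\<integral>\<^sup>+n. ennreal (f n) * indicator X n \<partial>count_space UNIV)"
    by (intro nn_integral_cong) (auto simp: indicator_def z)
  also have "\<dots> = (\<integral>\<^sup>+n. ennreal (f n) \<partial>count_space X)"
    by (simp add: nn_integral_count_space_indicator)
  also have "\<dots> = (\<Sum>n\<in>X. ennreal (f n))" by (rule nn_integral_count_space_finite[OF fin])
  also have "\<dots> = ennreal (\<Sum>n\<in>X. f n)" using nn by simp
  finally show ?thesis .
qed

lemma translate2:
  fixes A :: "(real \<times> real) set" assumes [measurable]: "A \<in> sets borel"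
  shows "emeasure lborel ((\<lambda>x. x - c) -` A) = emeasure lborel A"
proof -
  have "emeasure lborel A = emeasure (distr lborel borel ((+) (- c))) A" by (simp add: lborel_distr_plus)
  also have "\<dots> = emeasure lborel ((+) (- c) -` A \<inter> space lborel)" by (rule emeasure_distr) auto
  also have "(+) (- c) -` A \<inter> space lborel = (\<lambda>x. x - c) -` A" by auto
  finally show ?thesis by simp
qed

lemma sliceA:
  fixes cs T :: real and ctr a b :: "(real \<times> real) \<times> real" and m1 m2 m3 nm :: real and n :: int
  assumes cs: "cs \<ge> 3" and T: "T > 1" and a: "a \<in> Vset cs ctr" and b: "b \<in> Vset cs ctr"
    and mdef: "(1/2) *\<^sub>R (a + b) = ((m1, m2), m3)" and nm: "nm = norm ((1/2) *\<^sub>R (a + b))"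
  shows "(\<integral>\<^sup>+ xi. indicator (Uset cs T a b) (xi, real_of_int n) \<partial>lborel)
      \<le> emeasure lborel (Bt (m1/nm) (m2/nm) (m3/nm) ((norm (a - b))^2 / 4) (1/T) (real_of_int n - m3))"
proof -
  define \<epsilon> where "\<epsilon> = 1 / T"
  have \<epsilon>0: "\<epsilon> > 0" "\<epsilon> \<le> 1" using T by (auto simp: \<epsilon>_def)
  have na: "cs - 1 \<le> norm a" "norm a \<le> cs + 1" "dist ctr a \<le> cs/100" using a unfolding Vset_def by auto
  have nb: "cs - 1 \<le> norm b" "norm b \<le> cs + 1" "dist ctr b \<le> cs/100" using b unfolding Vset_def by auto
  have ab: "norm (a - b) \<le> cs / 50"
  proof -
    have "dist a b \<le> dist ctr a + dist ctr b" by (rule dist_triangle3)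
    then show ?thesis using na nb by (simp add: dist_norm)
  qed
  define m where "m = (1/2) *\<^sub>R (a + b)"
  define B where "B = Bt (m1/nm) (m2/nm) (m3/nm) ((norm (a - b))^2 / 4) (1/T) (real_of_int n - m3)"
  have nmpos: "nm \<ge> cs / 2"
    using geom(2)[of cs \<epsilon> a b a] cs \<epsilon>0 na nb ab unfolding nm by simp
  have ind: "indicator (Uset cs T a b) (xi, real_of_int n) \<le> (indicator ((\<lambda>x. x - (m1, m2)) -` B) xi :: ennreal)" for xi
  proof (cases "(xi, real_of_int n) \<in> Uset cs T a b")
    case False then show ?thesis by simp
  next
    case True
    define z where "z = (xi, real_of_int n)"
    have hz: "cs - 1 \<le> norm z" "norm z \<le> cs + 1" "\<bar>(z - a) \<bullet> (z - b)\<bar> \<le> \<epsilon>"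
      using True unfolding z_def Uset_def \<epsilon>_def by auto
    have g1: "\<bar>m \<bullet> (z - m)\<bar> \<le> 5 * norm m" and g3: "\<bar>(norm (z - m))^2 - (norm (a - b))^2 / 4\<bar> \<le> \<epsilon>"
      using geom[of cs \<epsilon> a b z] cs \<epsilon>0 na nb hz ab unfolding m_def by auto
    obtain x1 x2 where xi: "xi = (x1, x2)" by (cases xi)
    have zm: "z - m = ((x1 - m1, x2 - m2), real_of_int n - m3)" unfolding z_def xi m_def mdef by simp
    have inn: "m \<bullet> (z - m) = m1 * (x1 - m1) + m2 * (x2 - m2) + m3 * (real_of_int n - m3)"
      unfolding zm by (simp add: m_def mdef)
    have nrm: "(norm (z - m))^2 = (x1 - m1)^2 + (x2 - m2)^2 + (real_of_int n - m3)^2"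
      unfolding zm by (simp add: norm_Pair)
    have nmm: "norm m = nm" unfolding m_def nm by simp
    have np: "nm > 0" using nmpos cs by linarith
    have c1: "\<bar>(x1 - m1)^2 + (x2 - m2)^2 + (real_of_int n - m3)^2 - (norm (a - b))^2 / 4\<bar> \<le> 1/T"
      using g3 nrm \<epsilon>_def by simp
    have "\<bar>m1 / nm * (x1 - m1) + m2 / nm * (x2 - m2) + m3 / nm * (real_of_int n - m3)\<bar>
        = \<bar>m \<bullet> (z - m)\<bar> / nm"
    proof -
      have "m1 / nm * (x1 - m1) + m2 / nm * (x2 - m2) + m3 / nm * (real_of_int n - m3) = (m \<bullet> (z - m)) / nm"
        unfolding inn by (simp add: add_divide_distrib)
      then show ?thesis using np by simp
    qed
    also have "\<dots> \<le> 5" using g1 nmm np by (simp add: divide_le_eq)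
    finally have c2: "\<bar>m1 / nm * (x1 - m1) + m2 / nm * (x2 - m2) + m3 / nm * (real_of_int n - m3)\<bar> \<le> 5" .
    have "xi - (m1, m2) \<in> B" unfolding B_def Bt_def xi using c1 c2 by simp
    then show ?thesis using True by simp
  qed
  have "(\<integral>\<^sup>+ xi. indicator (Uset cs T a b) (xi, real_of_int n) \<partial>lborel)
      \<le> (\<integral>\<^sup>+ xi. indicator ((\<lambda>x. x - (m1, m2)) -` B) xi \<partial>lborel)"
    by (rule nn_integral_mono) (rule ind)
  also have "\<dots> = emeasure lborel ((\<lambda>x. x - (m1, m2)) -` B)"
  proof (rule nn_integral_indicator)
    have "closed B" unfolding B_def by (rule Bt_closed)
    then have "closed ((\<lambda>x. x - (m1, m2)) -` B)"
      by (rule continuous_closed_vimage) (auto intro!: continuous_intros)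
    then show "(\<lambda>x. x - (m1, m2)) -` B \<in> sets lborel" by (simp add: borel_closed)
  qed
  also have "\<dots> = emeasure lborel B" by (rule translate2) (simp add: B_def)
  finally show ?thesis unfolding B_def .
qed

lemma main_bound:
  fixes cs T :: real and ctr a b :: "(real \<times> real) \<times> real"
  assumes cs: "cs \<ge> 3" and T: "T > 1" and a: "a \<in> Vset cs ctr" and b: "b \<in> Vset cs ctr"
  shows "(\<integral>\<^sup>+ n. (\<integral>\<^sup>+ xi. indicator (Uset cs T a b) (xi, real_of_int n) \<partial>lborel) \<partial>count_space (UNIV :: int set))
        \<le> ennreal (500 / T)"
proof -
  obtain m1 m2 m3 where mdef: "(1/2) *\<^sub>R (a + b) = ((m1, m2), m3)" by (metis prod.collapse)
  define nm where "nm = norm ((1/2) *\<^sub>R (a + b))"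
  define \<epsilon> where "\<epsilon> = 1 / T"
  have \<epsilon>0: "\<epsilon> > 0" "\<epsilon> \<le> 1" using T by (auto simp: \<epsilon>_def)
  have na: "cs - 1 \<le> norm a" "norm a \<le> cs + 1" "dist ctr a \<le> cs/100" using a unfolding Vset_def by auto
  have nb: "cs - 1 \<le> norm b" "norm b \<le> cs + 1" "dist ctr b \<le> cs/100" using b unfolding Vset_def by auto
  have ab: "norm (a - b) \<le> cs / 50"
  proof -
    have "dist a b \<le> dist ctr a + dist ctr b" by (rule dist_triangle3)
    then show ?thesis using na nb by (simp add: dist_norm)
  qed
  have nmpos: "nm \<ge> cs / 2"
    using geom(2)[of cs \<epsilon> a b a] cs \<epsilon>0 na nb ab unfolding nm_def by simp
  have np: "nm > 0" using nmpos cs by linarith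
  define R2 where "R2 = (norm (a - b))^2 / 4"
  have R20: "R2 \<ge> 0" unfolding R2_def by simp
  define e1 where "e1 = m1 / nm"
  define e2 where "e2 = m2 / nm"
  define e3 where "e3 = m3 / nm"
  have nm2: "nm^2 = m1^2 + m2^2 + m3^2" unfolding nm_def mdef by (simp add: norm_Pair)
  have ee: "e1^2 + e2^2 + e3^2 = 1"
  proof -
    have "e1^2 + e2^2 + e3^2 = (m1^2 + m2^2 + m3^2) / nm^2"
      unfolding e1_def e2_def e3_def by (simp add: power_divide add_divide_distrib)
    also have "\<dots> = 1" unfolding nm2[symmetric] using np by simp
    finally show ?thesis .
  qed
  define p where "p = sqrt (e1^2 + e2^2)"
  define \<Lambda> where "\<Lambda> = p * sqrt (max (R2 + \<epsilon> - 25) 0)"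
  define A0 where "A0 = \<Lambda> - 5 * \<bar>e3\<bar> - 1"
  define t where "t n = real_of_int n - m3" for n :: int
  have \<Lambda>0: "\<Lambda> \<ge> 0" unfolding \<Lambda>_def p_def by simp
  have p1: "p \<le> 1"
  proof -
    have "e1^2 + e2^2 \<le> 1" using ee zero_le_power2[of e3] by linarith
    then show ?thesis by (simp add: p_def)
  qed
  have e31: "\<bar>e3\<bar> \<le> 1" 
  proof -
    have "e3^2 \<le> 1" using ee zero_le_power2[of e1] zero_le_power2[of e2] by linarith
    then show ?thesis by (simp add: abs_square_le_1)
  qed
  define g where "g n = (if \<bar>t n\<bar> < A0 then 40 * \<epsilon> / sqrt (\<Lambda> * (\<Lambda> - 5 * \<bar>e3\<bar> - \<bar>t n\<bar>)) else 0)" for n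
  define h where "h n = (if A0 \<le> \<bar>t n\<bar> \<and> \<bar>t n\<bar> \<le> A0 + 16 then 2 * pi * \<epsilon> else 0)" for n
  have g0: "g n \<ge> 0" for n unfolding g_def using \<epsilon>0 \<Lambda>0 by (auto simp: A0_def)
  have h0: "h n \<ge> 0" for n unfolding h_def using \<epsilon>0 by auto
  have slice: "(\<integral>\<^sup>+ xi. indicator (Uset cs T a b) (xi, real_of_int n) \<partial>lborel)
      \<le> emeasure lborel (Bt e1 e2 e3 R2 \<epsilon> (t n))" for n
    using sliceA[OF cs T a b mdef nm_def[unfolded], of n] unfolding e1_def e2_def e3_def R2_def \<epsilon>_def t_def .
  have bnd: "emeasure lborel (Bt e1 e2 e3 R2 \<epsilon> (t n)) \<le> ennreal (g n + h n)" for n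
  proof -
    consider (M) "\<bar>t n\<bar> < A0" | (E) "A0 \<le> \<bar>t n\<bar> \<and> \<bar>t n\<bar> \<le> A0 + 16" | (O) "\<bar>t n\<bar> > A0 + 16" by linarith
    then show ?thesis
    proof cases
      case M
      have "emeasure lborel (Bt e1 e2 e3 R2 \<epsilon> (t n)) \<le> ennreal (40 * \<epsilon> / sqrt (\<Lambda> * (\<Lambda> - 5 * \<bar>e3\<bar> - \<bar>t n\<bar>)))"
        by (rule Mbound[OF ee p_def \<epsilon>0(1) \<Lambda>_def refl]) (use M A0_def in linarith)
      also have "\<dots> \<le> ennreal (g n + h n)" using M h0[of n] unfolding g_def by (intro ennreal_leI) simp
      finally show ?thesis .
    next
      case E
      have "emeasure lborel (Bt e1 e2 e3 R2 \<epsilon> (t n)) \<le> ennreal (2 * pi * \<epsilon>)"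
        by (rule annulus_bound[OF \<epsilon>0(1)])
      also have "\<dots> \<le> ennreal (g n + h n)" using E g0[of n] unfolding h_def by (intro ennreal_leI) simp
      finally show ?thesis .
    next
      case O
      define S where "S = sqrt (R2 + \<epsilon>)"
      define S' where "S' = sqrt (max (R2 + \<epsilon> - 25) 0)"
      have S'0: "S' \<ge> 0" unfolding S'_def by simp
      have "S \<le> sqrt ((S' + 5)^2)" unfolding S_def
      proof (rule real_sqrt_le_mono)
        have "S'^2 = max (R2 + \<epsilon> - 25) 0" unfolding S'_def by simp
        then have "R2 + \<epsilon> \<le> S'^2 + 25" by linarith
        also have "\<dots> \<le> (S' + 5)^2" using S'0 by (simp add: power2_eq_square algebra_simps)
        finally show "R2 + \<epsilon> \<le> (S' + 5)^2" .
      qed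
      then have SS: "S \<le> S' + 5" using S'0 by simp
      have p0: "p \<ge> 0" unfolding p_def by simp
      have "p * S \<le> p * (S' + 5)" using SS p0 by (rule mult_left_mono)
      also have "\<dots> = \<Lambda> + 5 * p" unfolding \<Lambda>_def S'_def by (simp add: algebra_simps)
      finally have "p * S \<le> \<Lambda> + 5" using p1 by linarith
      then have "\<bar>t n\<bar> > 5 * \<bar>e3\<bar> + p * sqrt (R2 + \<epsilon>)" using O e31 unfolding A0_def S_def by linarith
      then have "Bt e1 e2 e3 R2 \<epsilon> (t n) = {}" by (rule Bt_empty[OF ee p_def \<epsilon>0(1) R20])
      then show ?thesis by simp
    qed
  qed
  define M where "M = {n. \<bar>t n\<bar> < A0}"
  define E where "E = {n. A0 \<le> \<bar>t n\<bar> \<and> \<bar>t n\<bar> \<le> A0 + 16}"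
  have finM: "finite M"
    by (rule finite_subset[OF _ finite_int_band[of m3 "\<bar>A0\<bar>"]]) (auto simp: M_def t_def)
  have finE: "finite E"
    by (rule finite_subset[OF _ finite_int_band[of m3 "\<bar>A0\<bar> + 16"]]) (auto simp: E_def t_def)
  have "(\<integral>\<^sup>+ n. (\<integral>\<^sup>+ xi. indicator (Uset cs T a b) (xi, real_of_int n) \<partial>lborel) \<partial>count_space (UNIV :: int set))
      \<le> (\<integral>\<^sup>+ n. ennreal (g n + h n) \<partial>count_space UNIV)"
    by (rule nn_integral_mono) (rule order_trans[OF slice bnd])
  also have "\<dots> = (\<integral>\<^sup>+ n. ennreal (g n) \<partial>count_space UNIV) + (\<integral>\<^sup>+ n. ennreal (h n) \<partial>count_space UNIV)"
  proof -
    have "(\<lambda>n. ennreal (g n + h n)) = (\<lambda>n. ennreal (g n) + ennreal (h n))"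
      using g0 h0 by (simp add: ennreal_plus)
    then show ?thesis by (simp add: nn_integral_add)
  qed
  also have "(\<integral>\<^sup>+ n. ennreal (g n) \<partial>count_space UNIV) = ennreal (\<Sum>n\<in>M. g n)"
    by (rule nn_count_finite[OF finM _ g0]) (auto simp: g_def M_def)
  also have "(\<integral>\<^sup>+ n. ennreal (h n) \<partial>count_space UNIV) = ennreal (\<Sum>n\<in>E. h n)"
    by (rule nn_count_finite[OF finE _ h0]) (auto simp: h_def E_def)
  also have "ennreal (\<Sum>n\<in>M. g n) + ennreal (\<Sum>n\<in>E. h n) = ennreal ((\<Sum>n\<in>M. g n) + (\<Sum>n\<in>E. h n))"
    using g0 h0 by (simp add: sum_nonneg)
  also have "\<dots> \<le> ennreal (500 / T)"
  proof (rule ennreal_leI)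
    have hE: "(\<Sum>n\<in>E. h n) \<le> 2 * pi * \<epsilon> * 34"
    proof -
      have "(\<Sum>n\<in>E. h n) = (\<Sum>n\<in>E. 2 * pi * \<epsilon>)" by (rule sum.cong) (auto simp: h_def E_def)
      also have "\<dots> = 2 * pi * \<epsilon> * card E" by simp
      also have "\<dots> \<le> 2 * pi * \<epsilon> * 34"
      proof (rule mult_left_mono)
        have "card E \<le> 34" unfolding E_def t_def by (rule card_E)
        then show "real (card E) \<le> 34" by simp
      qed (use \<epsilon>0 in simp)
      finally show ?thesis .
    qed
    have gM: "(\<Sum>n\<in>M. g n) \<le> 160 * \<epsilon>"
    proof -
      define Mp where "Mp = {n\<in>M. m3 \<le> real_of_int n}"
      define Mn where "Mn = {n\<in>M. \<not> m3 \<le> real_of_int n}"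
      have MU: "M = Mp \<union> Mn" "Mp \<inter> Mn = {}" unfolding Mp_def Mn_def by auto
      have finp: "finite Mp" "finite Mn" using finM unfolding Mp_def Mn_def by auto
      define K where "K = 40 * \<epsilon> / sqrt \<Lambda>"
      have K0: "K \<ge> 0" unfolding K_def using \<epsilon>0 \<Lambda>0 by simp
      have KK: "K * (2 * sqrt \<Lambda>) \<le> 80 * \<epsilon>"
      proof (cases "\<Lambda> = 0")
        case True then show ?thesis using \<epsilon>0 by (simp add: K_def)
      next
        case False then have "sqrt \<Lambda> > 0" using \<Lambda>0 by simp
        then show ?thesis unfolding K_def by simp
      qed
      have gform: "g n = K * (1 / sqrt (\<Lambda> - 5 * \<bar>e3\<bar> - \<bar>t n\<bar>))" if "n \<in> M" for n
        using that unfolding g_def M_def K_def by (simp add: real_sqrt_mult)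
      have sp: "(\<Sum>n\<in>Mp. g n) \<le> 80 * \<epsilon>"
      proof -
        have "(\<Sum>n\<in>Mp. g n) = K * (\<Sum>n\<in>Mp. 1 / sqrt ((\<Lambda> - 5 * \<bar>e3\<bar> + m3) + (-1) * real_of_int n))"
          unfolding sum_distrib_left
        proof (rule sum.cong[OF refl])
          fix n assume n: "n \<in> Mp"
          then have "n \<in> M" "m3 \<le> real_of_int n" unfolding Mp_def by auto
          moreover have "\<Lambda> - 5 * \<bar>e3\<bar> - \<bar>t n\<bar> = \<Lambda> - 5 * \<bar>e3\<bar> + m3 + -1 * real_of_int n"
            using \<open>m3 \<le> real_of_int n\<close> unfolding t_def by simp
          ultimately show "g n = K * (1 / sqrt (\<Lambda> - 5 * \<bar>e3\<bar> + m3 + -1 * real_of_int n))"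
            using gform by metis
        qed
        also have "\<dots> \<le> K * (2 * sqrt \<Lambda>)"
        proof (rule mult_left_mono[OF sum_floor K0])
          show "(-1::real) = 1 \<or> (-1::real) = -1" by simp
          show "finite Mp" by (rule finp)
          show "\<Lambda> \<ge> 0" by (rule \<Lambda>0)
          fix n assume "n \<in> Mp"
          then have "m3 \<le> real_of_int n" "\<bar>t n\<bar> < A0" unfolding Mp_def M_def by auto
          then show "1 < \<Lambda> - 5 * \<bar>e3\<bar> + m3 + -1 * real_of_int n \<and> \<Lambda> - 5 * \<bar>e3\<bar> + m3 + -1 * real_of_int n \<le> \<Lambda>"
            unfolding A0_def t_def by auto
        qed
        finally show ?thesis using KK by linarith
      qed
      have sn: "(\<Sum>n\<in>Mn. g n) \<le> 80 * \<epsilon>"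
      proof -
        have "(\<Sum>n\<in>Mn. g n) = K * (\<Sum>n\<in>Mn. 1 / sqrt ((\<Lambda> - 5 * \<bar>e3\<bar> - m3) + 1 * real_of_int n))"
          unfolding sum_distrib_left
        proof (rule sum.cong[OF refl])
          fix n assume n: "n \<in> Mn"
          then have "n \<in> M" "\<not> m3 \<le> real_of_int n" unfolding Mn_def by auto
          moreover have "\<Lambda> - 5 * \<bar>e3\<bar> - \<bar>t n\<bar> = \<Lambda> - 5 * \<bar>e3\<bar> - m3 + 1 * real_of_int n"
            using \<open>\<not> m3 \<le> real_of_int n\<close> unfolding t_def by simp
          ultimately show "g n = K * (1 / sqrt (\<Lambda> - 5 * \<bar>e3\<bar> - m3 + 1 * real_of_int n))"
            using gform by metis
        qed
        also have "\<dots> \<le> K * (2 * sqrt \<Lambda>)"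
        proof (rule mult_left_mono[OF sum_floor K0])
          show "(1::real) = 1 \<or> (1::real) = -1" by simp
          show "finite Mn" by (rule finp)
          show "\<Lambda> \<ge> 0" by (rule \<Lambda>0)
          fix n assume "n \<in> Mn"
          then have "\<not> m3 \<le> real_of_int n" "\<bar>t n\<bar> < A0" unfolding Mn_def M_def by auto
          then show "1 < \<Lambda> - 5 * \<bar>e3\<bar> - m3 + 1 * real_of_int n \<and> \<Lambda> - 5 * \<bar>e3\<bar> - m3 + 1 * real_of_int n \<le> \<Lambda>"
            unfolding A0_def t_def by auto
        qed
        finally show ?thesis using KK by linarith
      qed
      have "(\<Sum>n\<in>M. g n) = (\<Sum>n\<in>Mp. g n) + (\<Sum>n\<in>Mn. g n)"
        unfolding MU(1) by (rule sum.union_disjoint[OF finp MU(2)])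
      then show ?thesis using sp sn by linarith
    qed
    have "pi \<le> 4" using pi_less_4 by simp
    then have "2 * pi * \<epsilon> * 34 \<le> 2 * 4 * \<epsilon> * 34" using \<epsilon>0 by (intro mult_right_mono) auto
    then have "(\<Sum>n\<in>M. g n) + (\<Sum>n\<in>E. h n) \<le> 500 * \<epsilon>" using hE gM \<epsilon>0 by linarith
    then show "(\<Sum>n\<in>M. g n) + (\<Sum>n\<in>E. h n) \<le> 500 / T" unfolding \<epsilon>_def by simp
  qed
  finally show ?thesis .
qed

theorem mainTheorem9:
  shows "\<exists>N0 C::real. N0 \<ge> 1 \<and> C > 0 \<and>
    (\<forall>cs T::real. \<forall>ctr :: (real \<times> real) \<times> real. \<forall>a b.
      cs \<ge> N0 \<longrightarrow> T > 1 \<longrightarrow> a \<in> Vset cs ctr \<longrightarrow> b \<in> Vset cs ctr \<longrightarrow>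
      (\<integral>\<^sup>+ n. (\<integral>\<^sup>+ xi. indicator (Uset cs T a b) (xi, real_of_int n) \<partial>lborel) \<partial>count_space (UNIV :: int set))
        \<le> ennreal (C / T))"
proof (rule exI[of _ 3], rule exI[of _ 500], intro conjI allI impI)
  fix cs T :: real and ctr a b :: "(real \<times> real) \<times> real"
  assume "3 \<le> cs" "1 < T" "a \<in> Vset cs ctr" "b \<in> Vset cs ctr"
  then show "(\<integral>\<^sup>+ n. (\<integral>\<^sup>+ xi. indicator (Uset cs T a b) (xi, real_of_int n) \<partial>lborel) \<partial>count_space (UNIV :: int set))
        \<le> ennreal (500 / T)" by (rule main_bound)
qed simp_all

end
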